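(* Let $k\ge 1$ be an integer and let $r=R(k,k+1)$ be the Ramsey number (the least $r$ such that every simple graph on at least $r$ vertices contains an independent set of size $k$ or a clique of size $k+1$). Then for every graph $G$ on at least $r$ vertices, $\lambda(G)\ge k$; consequently $\Lambda_n\ge k$ for all $n\ge r$. In particular (since $R(3,4)=9$), $\Lambda_n\ge 3$ for all $n\ge 9$.
   Context: All graphs are finite, simple and undirected. For a graph $G=(V,E)$ and $v\in V$, let $N_v$ be the neighbourhood of $v$; the local complementation $G^v$ is obtained by complementing the subgraph induced on $N_v$. The LC orbit $[G]$ is the set of graphs obtainable from $G$ by finite sequences of local complementations. $\alpha(G)$ is the independence number of $G$, $\lambda(G)=\max_{H\in[G]}\alpha(H)$, and $\Lambda_n$ is the minimum of $\lambda(G)$ over all graphs $G$ on $n$ vertices. *)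

theory Defs
  imports Main
begin

type_synonym 'a graph = "'a set \<times> 'a set set"

definition is_graph :: "'a graph \<Rightarrow> bool" where
  "is_graph G \<longleftrightarrow> finite (fst G) \<and>
     (\<forall>e\<in>snd G. \<exists>x y. x \<noteq> y \<and> x \<in> fst G \<and> y \<in> fst G \<and> e = {x, y})"

definition nbhd :: "'a graph \<Rightarrow> 'a \<Rightarrow> 'a set" where
  "nbhd G v = {u \<in> fst G. {u, v} \<in> snd G}"

definition local_comp :: "'a graph \<Rightarrow> 'a \<Rightarrow> 'a graph" where
  "local_comp G v =
     (fst G, (snd G - {{x, y} | x y. x \<in> nbhd G v \<and> y \<in> nbhd G v \<and> x \<noteq> y})
             \<union> ({{x, y} | x y. x \<in> nbhd G v \<and> y \<in> nbhd G v \<and> x \<noteq> y} - snd G))"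

inductive_set lc_orbit :: "'a graph \<Rightarrow> 'a graph set" for G :: "'a graph" where
  base: "G \<in> lc_orbit G"
| step: "H \<in> lc_orbit G \<Longrightarrow> v \<in> fst H \<Longrightarrow> local_comp H v \<in> lc_orbit G"

definition indep_set :: "'a graph \<Rightarrow> 'a set \<Rightarrow> bool" where
  "indep_set G S \<longleftrightarrow> S \<subseteq> fst G \<and> (\<forall>x\<in>S. \<forall>y\<in>S. {x, y} \<notin> snd G)"

definition clique :: "'a graph \<Rightarrow> 'a set \<Rightarrow> bool" where
  "clique G S \<longleftrightarrow> S \<subseteq> fst G \<and> (\<forall>x\<in>S. \<forall>y\<in>S. x \<noteq> y \<longrightarrow> {x, y} \<in> snd G)"

definition alpha :: "'a graph \<Rightarrow> nat" where
  "alpha G = Max {card S | S. indep_set G S}"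

definition lam :: "'a graph \<Rightarrow> nat" where
  "lam G = Max (alpha ` lc_orbit G)"

definition Lam :: "nat \<Rightarrow> nat" where
  "Lam n = Min {lam G | G :: nat graph. is_graph G \<and> fst G = {..<n}}"

definition ramsey_prop :: "nat \<Rightarrow> nat \<Rightarrow> nat \<Rightarrow> bool" where
  "ramsey_prop k l r \<longleftrightarrow> (\<forall>G :: nat graph. is_graph G \<and> card (fst G) \<ge> r \<longrightarrow>
      (\<exists>S. indep_set G S \<and> card S = k) \<or> (\<exists>S. clique G S \<and> card S = l))"

definition ramsey :: "nat \<Rightarrow> nat \<Rightarrow> nat" where
  "ramsey k l = (LEAST r. ramsey_prop k l r)"

end

theory Submission
  imports Defs
begin

lemma noloop: "is_graph G \<Longrightarrow> {x} \<notin> snd G"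
  unfolding is_graph_def by (auto simp: doubleton_eq_iff)

lemma lc_fst[simp]: "fst (local_comp G v) = fst G"
  by (simp add: local_comp_def)

lemma lc_nonedge:
  assumes "a \<in> nbhd G v" "b \<in> nbhd G v" "a \<noteq> b" "{a,b} \<in> snd G"
  shows "{a,b} \<notin> snd (local_comp G v)"
  using assms unfolding local_comp_def by auto

lemma lc_keep:
  assumes "a \<notin> nbhd G v"
  shows "({a,b} \<in> snd (local_comp G v)) = ({a,b} \<in> snd G)"
proof -
  have "{a,b} \<notin> {{x, y} | x y. x \<in> nbhd G v \<and> y \<in> nbhd G v \<and> x \<noteq> y}"
    using assms by (auto simp: doubleton_eq_iff)
  then show ?thesis unfolding local_comp_def by auto
qed

lemma lc_graph:
  assumes "is_graph G" shows "is_graph (local_comp G v)"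
proof -
  have "nbhd G v \<subseteq> fst G" by (auto simp: nbhd_def)
  then show ?thesis using assms unfolding is_graph_def local_comp_def by auto
qed

lemma orbit_graph: "H \<in> lc_orbit G \<Longrightarrow> is_graph G \<Longrightarrow> is_graph H"
  by (induction rule: lc_orbit.induct) (auto intro: lc_graph)

lemma orbit_fst: "H \<in> lc_orbit G \<Longrightarrow> fst H = fst G"
  by (induction rule: lc_orbit.induct) auto

lemma graph_edges: "is_graph G \<Longrightarrow> snd G \<subseteq> Pow (fst G)"
  unfolding is_graph_def by auto

lemma finite_orbit:
  assumes "is_graph G" shows "finite (lc_orbit G)"
proof -
  have fin: "finite (fst G)" using assms by (simp add: is_graph_def)
  have "lc_orbit G \<subseteq> {fst G} \<times> Pow (Pow (fst G))"
  proof
    fix H assume "H \<in> lc_orbit G"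
    then have "fst H = fst G" "snd H \<subseteq> Pow (fst G)"
      using orbit_fst[of H G] orbit_graph[of H G] graph_edges[of H] assms by auto
    then show "H \<in> {fst G} \<times> Pow (Pow (fst G))"
      by (simp add: mem_Times_iff)
  qed
  moreover have "finite ({fst G} \<times> Pow (Pow (fst G)))" using fin by simp
  ultimately show ?thesis by (rule finite_subset)
qed

lemma alpha_ge:
  assumes "finite (fst H)" "indep_set H S" shows "card S \<le> alpha H"
proof -
  have "{card S | S. indep_set H S} \<subseteq> card ` Pow (fst H)"
    by (auto simp: indep_set_def)
  then have "finite {card S | S. indep_set H S}"
    using assms(1) finite_subset by blast
  then show ?thesis unfolding alpha_def using assms(2) by (auto intro: Max_ge)
qed

lemma lam_ge:
  assumes "is_graph G" "H \<in> lc_orbit G" "indep_set H S" shows "card S \<le> lam G"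
proof -
  have "finite (fst H)" using orbit_graph[OF assms(2,1)] by (simp add: is_graph_def)
  then have "card S \<le> alpha H" using alpha_ge assms(3) by blast
  also have "alpha H \<le> lam G" unfolding lam_def
    using finite_orbit[OF assms(1)] assms(2) by (auto intro: Max_ge)
  finally show ?thesis .
qed

lemma clique_lam:
  assumes "is_graph G" "clique G C" "card C = Suc k"
  shows "k \<le> lam G"
proof -
  obtain v where v: "v \<in> C" using assms(3) by (metis card.empty ex_in_conv nat.distinct(1))
  have vV: "v \<in> fst G" using v assms(2) by (auto simp: clique_def)
  have sub: "C - {v} \<subseteq> nbhd G v"
    using assms(2) v by (auto simp: clique_def nbhd_def insert_commute)
  let ?H = "local_comp G v"
  have H: "?H \<in> lc_orbit G" by (intro lc_orbit.step lc_orbit.base vV)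
  have "indep_set ?H (C - {v})"
    unfolding indep_set_def
  proof (intro conjI ballI)
    show "C - {v} \<subseteq> fst ?H" using assms(2) by (auto simp: clique_def)
  next
    fix x y assume xy: "x \<in> C - {v}" "y \<in> C - {v}"
    show "{x, y} \<notin> snd ?H"
    proof (cases "x = y")
      case True then show ?thesis using noloop[OF lc_graph[OF assms(1)]] by simp
    next
      case False
      then show ?thesis using lc_nonedge[of x G v y] sub xy assms(2)
        by (auto simp: clique_def)
    qed
  qed
  moreover have "card (C - {v}) = k" using assms(3) v by simp
  ultimately show ?thesis using lam_ge[OF assms(1) H] by metis
qed

lemma ramsey_bound:
  "finite V \<Longrightarrow> (k + l) choose k \<le> card V \<Longrightarrow>
    (\<exists>S\<subseteq>V. card S = Suc k \<and> (\<forall>x\<in>S. \<forall>y\<in>S. x \<noteq> y \<longrightarrow> {x,y} \<notin> E))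
  \<or> (\<exists>S\<subseteq>V. card S = Suc l \<and> (\<forall>x\<in>S. \<forall>y\<in>S. x \<noteq> y \<longrightarrow> {x,y} \<in> E))"
proof (induction k arbitrary: l V)
  case 0
  then have "V \<noteq> {}" by auto
  then obtain x where "x \<in> V" by blast
  then show ?case by (intro disjI1 exI[of _ "{x}"]) auto
next
  case (Suc k)
  note outer = Suc.IH
  have "\<And>V. finite V \<Longrightarrow> (Suc k + l) choose Suc k \<le> card V \<Longrightarrow>
    (\<exists>S\<subseteq>V. card S = Suc (Suc k) \<and> (\<forall>x\<in>S. \<forall>y\<in>S. x \<noteq> y \<longrightarrow> {x,y} \<notin> E))
  \<or> (\<exists>S\<subseteq>V. card S = Suc l \<and> (\<forall>x\<in>S. \<forall>y\<in>S. x \<noteq> y \<longrightarrow> {x,y} \<in> E))"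
  proof (induction l)
    case 0
    then have "V \<noteq> {}" by auto
    then obtain x where "x \<in> V" by blast
    then show ?case by (intro disjI2 exI[of _ "{x}"]) auto
  next
    case (Suc l)
    note inner = Suc.IH
    have fin: "finite V" by fact
    have bnd: "(Suc (k + l) choose k) + (Suc (k + l) choose Suc k) \<le> card V"
      using Suc.prems(2) by simp
    have "0 < Suc (k + l) choose k" by simp
    then have "V \<noteq> {}" using bnd by auto
    then obtain x where x: "x \<in> V" by blast
    define A where "A = {y \<in> V - {x}. {x,y} \<in> E}"
    define B where "B = (V - {x}) - A"
    have finA: "finite A" and finB: "finite B" using fin by (auto simp: A_def B_def)
    have "A \<union> B = V - {x}" "A \<inter> B = {}" by (auto simp: A_def B_def)
    then have "card A + card B = card (V - {x})"
      using finA finB card_Un_disjoint by metis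
    also have "\<dots> = card V - 1" using x fin by simp
    finally have "card A + card B = card V - 1" .
    then have "(Suc (k + l) choose Suc k) \<le> card A \<or> (Suc (k + l) choose k) \<le> card B"
      using bnd by linarith
    then show ?case
    proof
      assume "(Suc (k + l) choose Suc k) \<le> card A"
      then have "(Suc k + l) choose Suc k \<le> card A" by simp
      from inner[OF finA this] show ?case
      proof
        assume "\<exists>S\<subseteq>A. card S = Suc (Suc k) \<and> (\<forall>x\<in>S. \<forall>y\<in>S. x \<noteq> y \<longrightarrow> {x,y} \<notin> E)"
        then obtain S where S: "S \<subseteq> A" "card S = Suc (Suc k)"
          "\<forall>x\<in>S. \<forall>y\<in>S. x \<noteq> y \<longrightarrow> {x,y} \<notin> E" by blast
        moreover have "A \<subseteq> V" by (auto simp: A_def)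
        ultimately have "S \<subseteq> V" by blast
        then show ?case using S(2,3) by (intro disjI1 exI[of _ S]) simp
      next
        assume "\<exists>S\<subseteq>A. card S = Suc l \<and> (\<forall>x\<in>S. \<forall>y\<in>S. x \<noteq> y \<longrightarrow> {x,y} \<in> E)"
        then obtain S where S: "S \<subseteq> A" "card S = Suc l"
          "\<forall>x\<in>S. \<forall>y\<in>S. x \<noteq> y \<longrightarrow> {x,y} \<in> E" by blast
        have "x \<notin> S" "finite S" using S(1) finA by (auto simp: A_def intro: finite_subset)
        then have "card (insert x S) = Suc (Suc l)" using S(2) by simp
        moreover have "insert x S \<subseteq> V" using S(1) x by (auto simp: A_def)
        moreover have "\<forall>a\<in>insert x S. \<forall>b\<in>insert x S. a \<noteq> b \<longrightarrow> {a,b} \<in> E"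
          using S(1,3) by (auto simp: A_def insert_commute)
        ultimately show ?case by (intro disjI2 exI[of _ "insert x S"]) simp
      qed
    next
      assume "(Suc (k + l) choose k) \<le> card B"
      then have "(k + Suc l) choose k \<le> card B" by simp
      from outer[OF finB this] show ?case
      proof
        assume "\<exists>S\<subseteq>B. card S = Suc k \<and> (\<forall>x\<in>S. \<forall>y\<in>S. x \<noteq> y \<longrightarrow> {x,y} \<notin> E)"
        then obtain S where S: "S \<subseteq> B" "card S = Suc k"
          "\<forall>x\<in>S. \<forall>y\<in>S. x \<noteq> y \<longrightarrow> {x,y} \<notin> E" by blast
        have "x \<notin> S" "finite S" using S(1) finB by (auto simp: B_def intro: finite_subset)
        then have "card (insert x S) = Suc (Suc k)" using S(2) by simp
        moreover have "insert x S \<subseteq> V" using S(1) x by (auto simp: B_def)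
        moreover have "\<forall>a\<in>insert x S. \<forall>b\<in>insert x S. a \<noteq> b \<longrightarrow> {a,b} \<notin> E"
          using S(1,3) by (auto simp: A_def B_def insert_commute)
        ultimately show ?case by (intro disjI1 exI[of _ "insert x S"]) simp
      next
        assume "\<exists>S\<subseteq>B. card S = Suc (Suc l) \<and> (\<forall>x\<in>S. \<forall>y\<in>S. x \<noteq> y \<longrightarrow> {x,y} \<in> E)"
        then obtain S where S: "S \<subseteq> B" "card S = Suc (Suc l)"
          "\<forall>x\<in>S. \<forall>y\<in>S. x \<noteq> y \<longrightarrow> {x,y} \<in> E" by blast
        moreover have "B \<subseteq> V" by (auto simp: B_def)
        ultimately have "S \<subseteq> V" by blast
        then show ?case using S(2,3) by (intro disjI2 exI[of _ S]) simp
      qed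
    qed
  qed
  then show ?case using Suc.prems by blast
qed

lemma ramsey_nat:
  assumes "1 \<le> k" "1 \<le> l"
  shows "ramsey_prop k l ((k - 1 + (l - 1)) choose (k - 1))"
  unfolding ramsey_prop_def
proof (intro allI impI)
  fix G :: "nat graph" assume G: "is_graph G \<and> (k - 1 + (l - 1)) choose (k - 1) \<le> card (fst G)"
  have fin: "finite (fst G)" using G by (simp add: is_graph_def)
  have kk: "Suc (k - 1) = k" "Suc (l - 1) = l" using assms by auto
  have b: "(k - 1 + (l - 1)) choose (k - 1) \<le> card (fst G)" using G by simp
  from ramsey_bound[OF fin b, of "snd G"]
  show "(\<exists>S. indep_set G S \<and> card S = k) \<or> (\<exists>S. clique G S \<and> card S = l)"
  proof (elim disjE exE conjE)
    fix S assume S: "S \<subseteq> fst G" "card S = Suc (k - 1)"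
      "\<forall>x\<in>S. \<forall>y\<in>S. x \<noteq> y \<longrightarrow> {x,y} \<notin> snd G"
    have "indep_set G S" unfolding indep_set_def
    proof (intro conjI ballI)
      show "S \<subseteq> fst G" by fact
    next
      fix x y assume "x \<in> S" "y \<in> S"
      then show "{x,y} \<notin> snd G"
        by (cases "x = y") (use S noloop[of G] G in auto)
    qed
    then show ?thesis using S(2) kk by auto
  next
    fix S assume S: "S \<subseteq> fst G" "card S = Suc (l - 1)"
      "\<forall>x\<in>S. \<forall>y\<in>S. x \<noteq> y \<longrightarrow> {x,y} \<in> snd G"
    have "clique G S" unfolding clique_def using S by auto
    then show ?thesis using S(2) kk by auto
  qed
qed

lemma ramsey_holds:
  assumes "1 \<le> k" "1 \<le> l"
  shows "ramsey_prop k l (ramsey k l)"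
  unfolding ramsey_def by (rule LeastI[where P="ramsey_prop k l", OF ramsey_nat[OF assms]])

lemma transfer_ramsey:
  fixes G :: "'a graph"
  assumes G: "is_graph G" and rp: "ramsey_prop k l r" and c: "r \<le> card (fst G)"
  shows "(\<exists>S. indep_set G S \<and> card S = k) \<or> (\<exists>S. clique G S \<and> card S = l)"
proof -
  let ?V = "fst G" and ?E = "snd G"
  have fin: "finite ?V" using G by (simp add: is_graph_def)
  obtain f :: "'a \<Rightarrow> nat" where f: "bij_betw f ?V {0..<card ?V}"
    using ex_bij_betw_finite_nat[OF fin] by blast
  have inj: "inj_on f ?V" using f by (simp add: bij_betw_def)
  define G' :: "nat graph" where "G' = (f ` ?V, (\<lambda>e. f ` e) ` ?E)"
  have G': "is_graph G'"
    unfolding is_graph_def G'_def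
  proof (intro conjI ballI)
    show "finite (fst (f ` ?V, (\<lambda>e. f ` e) ` ?E))" using fin by simp
  next
    fix e' assume "e' \<in> snd (f ` ?V, (\<lambda>e. f ` e) ` ?E)"
    then obtain e where e: "e \<in> ?E" "e' = f ` e" by auto
    then obtain x y where xy: "x \<noteq> y" "x \<in> ?V" "y \<in> ?V" "e = {x,y}"
      using G unfolding is_graph_def by blast
    have "f x \<noteq> f y" using inj xy by (meson inj_on_contraD)
    then show "\<exists>x y. x \<noteq> y \<and> x \<in> fst (f ` ?V, (\<lambda>e. f ` e) ` ?E)
        \<and> y \<in> fst (f ` ?V, (\<lambda>e. f ` e) ` ?E) \<and> e' = {x, y}"
      using xy e by (intro exI[of _ "f x"] exI[of _ "f y"]) auto
  qed
  have "card (fst G') = card ?V" unfolding G'_def using card_image[OF inj] by simp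
  then have "(\<exists>S. indep_set G' S \<and> card S = k) \<or> (\<exists>S. clique G' S \<and> card S = l)"
    using rp c G' unfolding ramsey_prop_def by (simp only:)
  then show ?thesis
  proof (elim disjE exE conjE)
    fix S' assume S': "indep_set G' S'" "card S' = k"
    define S where "S = ?V \<inter> f -` S'"
    have sub: "S \<subseteq> ?V" by (auto simp: S_def)
    have img: "f ` S = S'" using S'(1) by (auto simp: S_def indep_set_def G'_def)
    have "card (f ` S) = card S" by (rule card_image[OF inj_on_subset[OF inj sub]])
    then have cS: "card S = k" using S'(2) img by simp
    have "\<forall>x\<in>S. \<forall>y\<in>S. {x,y} \<notin> ?E"
    proof (intro ballI)
      fix x y assume xy: "x \<in> S" "y \<in> S"
      show "{x,y} \<notin> ?E"
      proof
        assume "{x,y} \<in> ?E"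
        then have "f ` {x,y} \<in> (\<lambda>e. f ` e) ` ?E" by (rule imageI)
        then have "{f x, f y} \<in> snd G'" unfolding G'_def by simp
        moreover have "f x \<in> S'" "f y \<in> S'" using xy by (auto simp: S_def)
        ultimately show False using S'(1) unfolding indep_set_def by blast
      qed
    qed
    then have "indep_set G S" using sub by (simp add: indep_set_def)
    then show ?thesis using cS by blast
  next
    fix S' assume S': "clique G' S'" "card S' = l"
    define S where "S = ?V \<inter> f -` S'"
    have sub: "S \<subseteq> ?V" by (auto simp: S_def)
    have img: "f ` S = S'" using S'(1) by (auto simp: S_def clique_def G'_def)
    have "card (f ` S) = card S" by (rule card_image[OF inj_on_subset[OF inj sub]])
    then have cS: "card S = l" using S'(2) img by simp
    have "\<forall>x\<in>S. \<forall>y\<in>S. x \<noteq> y \<longrightarrow> {x,y} \<in> ?E"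
    proof (intro ballI impI)
      fix x y assume xy: "x \<in> S" "y \<in> S" "x \<noteq> y"
      have xyV: "x \<in> ?V" "y \<in> ?V" using xy sub by auto
      have "f x \<noteq> f y" using inj xy xyV by (meson inj_on_contraD)
      moreover have "f x \<in> S'" "f y \<in> S'" using xy by (auto simp: S_def)
      ultimately have "{f x, f y} \<in> snd G'" using S'(1) by (auto simp: clique_def)
      then obtain e where e: "e \<in> ?E" "{f x, f y} = f ` e" unfolding G'_def by auto
      then obtain a b where ab: "a \<in> ?V" "b \<in> ?V" "e = {a,b}"
        using G unfolding is_graph_def by blast
      have eq: "f ` {x,y} = f ` {a,b}" using e ab by simp
      have s1: "{x,y} \<subseteq> ?V" and s2: "{a,b} \<subseteq> ?V" using xyV ab by auto
      have "{x,y} = {a,b}" by (rule iffD1[OF inj_on_image_eq_iff[OF inj s1 s2] eq])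
      then show "{x,y} \<in> ?E" using e ab by simp
    qed
    then have "clique G S" using sub by (simp add: clique_def)
    then show ?thesis using cS by blast
  qed
qed

lemma part1:
  fixes G :: "'a graph"
  assumes "1 \<le> k" "is_graph G" "ramsey k (k + 1) \<le> card (fst G)"
  shows "k \<le> lam G"
proof -
  have "(\<exists>S. indep_set G S \<and> card S = k) \<or> (\<exists>S. clique G S \<and> card S = k + 1)"
    using transfer_ramsey[OF assms(2) ramsey_holds assms(3)] assms(1) by simp
  then show ?thesis
  proof (elim disjE exE conjE)
    fix S assume a: "indep_set G S" and b: "card S = k"
    have "card S \<le> lam G" by (rule lam_ge[OF assms(2) lc_orbit.base a])
    with b show ?thesis by simp
  next
    fix S assume "clique G S" "card S = k + 1"
    then show ?thesis using clique_lam[OF assms(2)] by simp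
  qed
qed

lemma Lam_ge:
  assumes "\<And>G :: nat graph. is_graph G \<Longrightarrow> fst G = {..<n} \<Longrightarrow> k \<le> lam G"
  shows "k \<le> Lam n"
proof -
  let ?A = "{G :: nat graph. is_graph G \<and> fst G = {..<n}}"
  have "?A \<subseteq> {{..<n}} \<times> Pow (Pow {..<n})"
    using graph_edges by (fastforce simp: mem_Times_iff)
  then have fin: "finite ?A" by (rule finite_subset) simp
  have eq: "{lam G | G :: nat graph. is_graph G \<and> fst G = {..<n}} = lam ` ?A" by auto
  have ne: "({..<n}, {}) \<in> ?A" by (simp add: is_graph_def)
  show ?thesis unfolding Lam_def eq using fin ne assms by (subst Min_ge_iff) auto
qed

lemma part3:
  fixes G :: "'a graph"
  assumes G: "is_graph G" and c: "9 \<le> card (fst G)"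
  shows "3 \<le> lam G"
proof -
  let ?V = "fst G" and ?E = "snd G"
  have fin: "finite ?V" using G by (simp add: is_graph_def)
  have "?V \<noteq> {}" using c by auto
  then obtain v where v: "v \<in> ?V" by blast
  define N where "N = nbhd G v"
  define M where "M = ?V - {v} - N"
  have NV: "N \<subseteq> ?V" by (auto simp: N_def nbhd_def)
  have vN: "v \<notin> N" using noloop[OF G, of v] by (auto simp: N_def nbhd_def)
  have Nadj: "\<And>u. u \<in> N \<Longrightarrow> {v,u} \<in> ?E" by (auto simp: N_def nbhd_def insert_commute)
  have Mnadj: "\<And>u. u \<in> M \<Longrightarrow> {v,u} \<notin> ?E" by (auto simp: M_def N_def nbhd_def insert_commute)
  have lamI: "\<And>H S. H \<in> lc_orbit G \<Longrightarrow> indep_set H S \<Longrightarrow> card S = 3 \<Longrightarrow> 3 \<le> lam G"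
    using lam_ge[OF G] by fastforce
  show ?thesis
  proof (cases "\<exists>x\<in>M. \<exists>y\<in>M. x \<noteq> y \<and> {x,y} \<notin> ?E")
    case True
    then obtain x y where xy: "x \<in> M" "y \<in> M" "x \<noteq> y" "{x,y} \<notin> ?E" by blast
    have xv: "x \<noteq> v" "y \<noteq> v" using xy by (auto simp: M_def)
    have "indep_set G {v,x,y}" unfolding indep_set_def
    proof (intro conjI ballI)
      show "{v,x,y} \<subseteq> ?V" using v xy by (auto simp: M_def)
    next
      fix a b assume "a \<in> {v,x,y}" "b \<in> {v,x,y}"
      then show "{a,b} \<notin> ?E"
        using xy Mnadj[of x] Mnadj[of y] noloop[OF G] by (auto simp: insert_commute)
    qed
    moreover have "card {v,x,y} = 3" using xv xy(3) by simp
    ultimately show ?thesis using lamI[OF lc_orbit.base] by blast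
  next
    case False
    then have Mcl: "\<And>x y. x \<in> M \<Longrightarrow> y \<in> M \<Longrightarrow> x \<noteq> y \<Longrightarrow> {x,y} \<in> ?E" by blast
    show ?thesis
    proof (cases "3 \<le> card M")
      case True
      then obtain T where T: "T \<subseteq> M" "card T = 3" by (meson obtain_subset_with_card_n)
      then obtain a b c where abc: "T = {a,b,c}" "a \<noteq> b" "b \<noteq> c" "a \<noteq> c"
        by (auto simp: card_3_iff)
      have inM: "a \<in> M" "b \<in> M" "c \<in> M" using T abc by auto
      let ?H = "local_comp G a"
      have aV: "a \<in> ?V" using inM by (auto simp: M_def)
      have H: "?H \<in> lc_orbit G" by (intro lc_orbit.step lc_orbit.base aV)
      have bN: "b \<in> nbhd G a" "c \<in> nbhd G a"
        using inM Mcl[of b a] Mcl[of c a] abc by (auto simp: nbhd_def M_def)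
      have vnot: "v \<notin> nbhd G a" using Mnadj[OF inM(1)] by (auto simp: nbhd_def)
      have bcv: "b \<noteq> v" "c \<noteq> v" using inM by (auto simp: M_def)
      have e1: "{b,c} \<notin> snd ?H" using lc_nonedge[OF bN abc(3)] Mcl[OF inM(2,3) abc(3)] by blast
      have e2: "{v,b} \<notin> snd ?H" "{v,c} \<notin> snd ?H"
        using lc_keep[OF vnot] Mnadj[OF inM(2)] Mnadj[OF inM(3)] by auto
      have nl: "\<And>z. {z} \<notin> snd ?H" using noloop[OF lc_graph[OF G]] by blast
      have "indep_set ?H {v,b,c}" unfolding indep_set_def
      proof (intro conjI ballI)
        show "{v,b,c} \<subseteq> fst ?H" using v inM by (auto simp: M_def)
      next
        fix x y assume "x \<in> {v,b,c}" "y \<in> {v,b,c}"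
        then show "{x,y} \<notin> snd ?H" using e1 e2 nl by (auto simp: insert_commute)
      qed
      moreover have "card {v,b,c} = 3" using bcv abc(3) by simp
      ultimately show ?thesis using lamI[OF H] by blast
    next
      case False
      have "?V = insert v (N \<union> M)" using v NV by (auto simp: M_def)
      moreover have "finite (N \<union> M)" using fin NV by (auto simp: M_def intro: finite_subset)
      ultimately have "card ?V \<le> Suc (card (N \<union> M))" by (simp add: card_insert_if)
      moreover have "card (N \<union> M) \<le> card N + card M" by (rule card_Un_le)
      ultimately have "card ?V \<le> Suc (card N + card M)" by linarith
      then have cN: "(2 + 2) choose 2 \<le> card N" using c False by (simp add: numeral_eq_Suc)
      have finN: "finite N" using fin NV finite_subset by blast
      from ramsey_bound[OF finN cN, of ?E]
      show ?thesis
      proof (elim disjE exE conjE)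
        fix S assume S: "S \<subseteq> N" "card S = Suc 2" "\<forall>x\<in>S. \<forall>y\<in>S. x \<noteq> y \<longrightarrow> {x,y} \<notin> ?E"
        have "indep_set G S" unfolding indep_set_def
        proof (intro conjI ballI)
          show "S \<subseteq> ?V" using S NV by auto
        next
          fix x y assume "x \<in> S" "y \<in> S"
          then show "{x,y} \<notin> ?E" by (cases "x = y") (use S noloop[OF G] in auto)
        qed
        then show ?thesis using lamI[OF lc_orbit.base] S(2) by simp
      next
        fix S assume S: "S \<subseteq> N" "card S = Suc 2" "\<forall>x\<in>S. \<forall>y\<in>S. x \<noteq> y \<longrightarrow> {x,y} \<in> ?E"
        let ?H = "local_comp G v"
        have H: "?H \<in> lc_orbit G" by (intro lc_orbit.step lc_orbit.base v)
        have nl: "\<And>z. {z} \<notin> snd ?H" using noloop[OF lc_graph[OF G]] by blast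
        have "indep_set ?H S" unfolding indep_set_def
        proof (intro conjI ballI)
          show "S \<subseteq> fst ?H" using S NV by auto
        next
          fix x y assume xy: "x \<in> S" "y \<in> S"
          show "{x,y} \<notin> snd ?H"
          proof (cases "x = y")
            case True then show ?thesis using nl by simp
          next
            case False
            then show ?thesis using lc_nonedge[of x G v y] S xy unfolding N_def by blast
          qed
        qed
        then show ?thesis using lamI[OF H] S(2) by simp
      qed
    qed
  qed
qed

theorem mainTheorem2:
  fixes k :: nat
  assumes "k \<ge> 1"
  shows "(\<forall>G :: 'a graph. is_graph G \<and> card (fst G) \<ge> ramsey k (k + 1) \<longrightarrow> lam G \<ge> k)
       \<and> (\<forall>n \<ge> ramsey k (k + 1). Lam n \<ge> k)
       \<and> (\<forall>n \<ge> 9. Lam n \<ge> 3)"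
proof (intro conjI allI impI)
  fix G :: "'a graph"
  assume "is_graph G \<and> card (fst G) \<ge> ramsey k (k + 1)"
  then show "lam G \<ge> k" using part1[OF assms] by blast
next
  fix n assume n: "n \<ge> ramsey k (k + 1)"
  show "Lam n \<ge> k"
  proof (rule Lam_ge)
    fix G :: "nat graph" assume "is_graph G" "fst G = {..<n}"
    then show "k \<le> lam G" using part1[OF assms, of G] n by simp
  qed
next
  fix n :: nat assume n: "n \<ge> 9"
  show "Lam n \<ge> 3"
  proof (rule Lam_ge)
    fix G :: "nat graph" assume "is_graph G" "fst G = {..<n}"
    then show "3 \<le> lam G" using part3[of G] n by simp
  qed
qed
end
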